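(* Let $p$ be a prime and $M$, $N$ integers with $p^2>N\ge1$. The linear complexity $L_p(M;N)$ of the sequence $q_p(u)$, $u=M+1,\ldots,M+N$ (viewed as elements of $\mathbb{F}_p$), satisfies $$L_p(M;N)\ge\min\Big\{\frac{p-1}{2},\,\frac{N-p-1}{3}\Big\}.$$
   Context: For a prime $p$ and an integer $u$ with $\gcd(u,p)=1$, the Fermat quotient $q_p(u)$ is the unique integer with $q_p(u)\equiv (u^{p-1}-1)/p \pmod p$ and $0\le q_p(u)\le p-1$; also $q_p(kp)=0$ for all $k\in\mathbb{Z}$. The linear complexity of an $N$-element sequence $s_0,\ldots,s_{N-1}$ in a ring $\mathcal{R}$ is the smallest $L$ such that $s_{u+L}=c_{L-1}s_{u+L-1}+\cdots+c_0s_u$ for all $0\le u\le N-L-1$, for some $c_0,\ldots,c_{L-1}\in\mathcal{R}$. *)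

theory Defs
  imports "HOL-Number_Theory.Number_Theory"
begin

definition fermat_quotient :: "int \<Rightarrow> int \<Rightarrow> int" where
  "fermat_quotient p u =
     (if p dvd u then 0 else ((u ^ nat (p - 1) - 1) div p) mod p)"

text \<open>Linear complexity over F_p (elements represented by integers modulo p)
  of the N-element sequence s 0, ..., s (N-1): the least L such that there are
  coefficients c 0, ..., c (L-1) in F_p with
  s (u+L) = c (L-1) s (u+L-1) + ... + c 0 s u  for all 0 <= u <= N-L-1.\<close>
definition lin_compl_mod :: "int \<Rightarrow> nat \<Rightarrow> (nat \<Rightarrow> int) \<Rightarrow> nat" where
  "lin_compl_mod p N s =
     (LEAST L. \<exists>c :: nat \<Rightarrow> int. \<forall>u. u + L < N \<longrightarrow>
        [s (u + L) = (\<Sum>i<L. c i * s (u + i))] (mod p))"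

end

theory Submission imports Defs "HOL-Computational_Algebra.Polynomial" begin

lemma fermat_int:
  fixes p v :: int
  assumes "prime p" "\<not> p dvd v"
  shows "p dvd (v ^ nat (p - 1) - 1)"
proof -
  define P where "P = nat p"
  define n where "n = nat (v mod p)"
  have p2: "p \<ge> 2" using assms(1) prime_ge_2_int by blast
  have Pp: "int P = p" using p2 P_def by simp
  have vn: "v mod p = int n" using p2 n_def by simp
  have pn: "prime P" using assms(1) P_def by simp
  have nd: "\<not> P dvd n"
  proof
    assume "P dvd n"
    hence "p dvd int n" using int_dvd_int_iff[of P n] Pp by simp
    hence "p dvd v mod p" using vn by simp
    thus False using assms(2) by (simp add: dvd_mod_iff)
  qed
  have "[n ^ (P - 1) = 1] (mod P)" using fermat_theorem[OF pn nd] .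
  hence "[int (n ^ (P - 1)) = int 1] (mod int P)" using cong_int_iff by blast
  moreover have "nat (p - 1) = P - 1" using p2 P_def by simp
  ultimately have c1: "[int n ^ nat (p - 1) = 1] (mod p)" using Pp by simp
  have c2: "[v ^ nat (p - 1) = (v mod p) ^ nat (p - 1)] (mod p)"
    by (simp add: cong_def power_mod)
  have "[v ^ nat (p - 1) = 1] (mod p)" using cong_trans[OF c2] c1 vn by simp
  thus ?thesis by (simp add: cong_iff_dvd_diff)
qed

lemma dvd_mod_sub: "(p::int) dvd (x mod p - x)"
  by (metis mod_eq_dvd_iff mod_mod_trivial)

lemma binom_aux:
  fixes v p :: int
  shows "\<exists>R. (v + p) ^ Suc n = v ^ Suc n + int (Suc n) * v ^ n * p + p^2 * R"
proof (induction n)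
  case 0
  then show ?case by (rule exI[of _ 0]) simp
next
  case (Suc n)
  then obtain R where R: "(v + p) ^ Suc n = v ^ Suc n + int (Suc n) * v ^ n * p + p^2 * R" by blast
  show ?case
    apply (rule exI[of _ "R * v + int (Suc n) * v ^ n + p * R"])
    apply (subst power_Suc2, subst R)
    by (simp add: algebra_simps power2_eq_square)
qed

lemma fq_shift:
  fixes p v :: int
  assumes "prime p" "\<not> p dvd v"
  shows "p dvd (fermat_quotient p (v + p) - fermat_quotient p v + v ^ nat (p - 2))"
proof -
  have p2: "p \<ge> 2" using assms(1) prime_ge_2_int by blast
  define n where "n = nat (p - 2)"
  have e: "nat (p - 1) = Suc n" using p2 n_def by simp
  obtain R where R: "(v + p) ^ Suc n = v ^ Suc n + int (Suc n) * v ^ n * p + p^2 * R"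
    using binom_aux by blast
  obtain t where t: "v ^ Suc n - 1 = p * t" using fermat_int[OF assms] e by (metis dvd_def)
  have nd: "\<not> p dvd (v + p)" using assms(2) by (simp add: dvd_add_left_iff)
  have sn: "int (Suc n) = p - 1" using p2 n_def by simp
  have R': "(v + p) ^ Suc n = v ^ Suc n + (p - 1) * v ^ n * p + p^2 * R" using R sn by simp
  have "(v + p) ^ Suc n - 1 = (v ^ Suc n - 1) + p * ((p - 1) * v ^ n + p * R)"
    unfolding R' by (simp add: algebra_simps power2_eq_square)
  also have "\<dots> = p * (t + (p - 1) * v ^ n + p * R)"
    unfolding t by (simp add: algebra_simps)
  finally have "(v + p) ^ Suc n - 1 = p * (t + (p - 1) * v ^ n + p * R)" .
  hence d1: "((v + p) ^ Suc n - 1) div p = t + (p - 1) * v ^ n + p * R" using p2 by simp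
  have d2: "(v ^ Suc n - 1) div p = t" using t p2 by simp
  have f1: "fermat_quotient p (v + p) = (t + (p - 1) * v ^ n + p * R) mod p"
    unfolding fermat_quotient_def using nd e d1 by simp
  have f2: "fermat_quotient p v = t mod p"
    unfolding fermat_quotient_def using assms(2) e d2 by simp
  have "p dvd ((t + (p - 1) * v ^ n + p * R) mod p - t mod p + v ^ n)"
  proof -
    define X where "X = t + (p - 1) * v ^ n + p * R"
    have eq: "X mod p - t mod p + v ^ n = (X mod p - X) - (t mod p - t) + p * (v ^ n + R)"
      unfolding X_def by (simp add: algebra_simps)
    have "p dvd (X mod p - X) - (t mod p - t) + p * (v ^ n + R)"
      by (intro dvd_add dvd_diff dvd_mod_sub dvd_triv_left)
    hence "p dvd X mod p - t mod p + v ^ n" by (simp only: eq)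
    thus ?thesis unfolding X_def .
  qed
  thus ?thesis using f1 f2 n_def by simp
qed


lemma roots_mod_p:
  fixes p :: int and F :: "int poly"
  assumes "prime p"
  shows "(\<exists>k. \<not> p dvd coeff F k) \<Longrightarrow> finite S \<Longrightarrow> inj_on (\<lambda>x. x mod p) S
     \<Longrightarrow> (\<forall>x\<in>S. p dvd poly F x) \<Longrightarrow> card S \<le> degree F"
proof (induction "degree F" arbitrary: F S rule: less_induct)
  case less
  show ?case
  proof (cases "S = {}")
    case True then show ?thesis by simp
  next
    case False
    then obtain a where a: "a \<in> S" by blast
    define G where "G = synthetic_div F a"
    have FG: "F = [:-a,1:] * G + [:poly F a:]" using synthetic_div_correct'[of a F] G_def by simp
    have pa: "p dvd poly F a" using less a by blast
    show ?thesis
    proof (cases "\<forall>k. p dvd coeff G k")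
      case True
      have "\<forall>k. p dvd coeff F k"
      proof
        fix k
        have e: "coeff F k = coeff ([:-a,1:] * G) k + coeff [:poly F a:] k" using FG by (metis coeff_add)
        have d1: "p dvd coeff ([:-a,1:] * G) k"
          unfolding coeff_mult using True by (intro dvd_sum) simp
        have d2: "p dvd coeff [:poly F a:] k" using pa by (cases k) auto
        show "p dvd coeff F k" unfolding e using d1 d2 by simp
      qed
      then show ?thesis using less(2) by blast
    next
      case False
      have dF: "degree F \<noteq> 0"
      proof
        assume d0: "degree F = 0"
        have "\<forall>k. p dvd coeff F k"
        proof
          fix k show "p dvd coeff F k"
          proof (cases k)
            case 0
            have "poly F a = coeff F 0" using d0 by (simp add: poly_altdef)
            then show ?thesis using pa 0 by simp
          next
            case (Suc k') then have "coeff F k = 0" using d0 coeff_eq_0[of F k] by simp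
            then show ?thesis by simp
          qed
        qed
        then show False using less(2) by blast
      qed
      have dG: "degree G < degree F" using dF unfolding G_def degree_synthetic_div by simp
      have roots: "\<forall>x\<in>S - {a}. p dvd poly G x"
      proof
        fix b assume b: "b \<in> S - {a}"
        have "poly F b = (b - a) * poly G b + poly F a"
          by (subst FG) (simp add: algebra_simps)
        hence "p dvd (b - a) * poly G b" using less(5) b pa
          by (metis DiffD1 add_diff_cancel_right' dvd_diff)
        moreover have "\<not> p dvd (b - a)"
        proof
          assume "p dvd (b - a)"
          hence "b mod p = a mod p" by (simp add: mod_eq_dvd_iff)
          thus False using less(4) a b by (auto dest: inj_onD)
        qed
        ultimately show "p dvd poly G b" using assms prime_dvd_mult_iff by blast
      qed
      have "card (S - {a}) \<le> degree G"
        using less(1)[OF dG _ _ _ roots] False less(3,4) by (auto intro: inj_on_subset)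
      moreover have "card S = card (S - {a}) + 1" using a less(3)
        by (metis card_Suc_Diff1 Suc_eq_plus1)
      ultimately show ?thesis using dG by simp
    qed
  qed
qed

definition Fpoly :: "nat \<Rightarrow> (nat \<Rightarrow> int) \<Rightarrow> int poly" where
  "Fpoly L d = (\<Sum>i\<le>L. smult (d i) (\<Prod>j\<in>{..L}-{i}. [:int j, 1:]))"

lemma poly_Fpoly: "poly (Fpoly L d) x = (\<Sum>i\<le>L. d i * (\<Prod>j\<in>{..L}-{i}. x + int j))"
  unfolding Fpoly_def by (simp add: poly_sum poly_prod add.commute)

lemma degree_Fpoly: "degree (Fpoly L d) \<le> L"
  unfolding Fpoly_def
proof (rule degree_sum_le)
  fix i assume i: "i \<in> {..L}"
  have "degree (\<Prod>j\<in>{..L}-{i}. [:int j, 1:]) \<le> (\<Sum>j\<in>{..L}-{i}. 1)"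
    using degree_prod_sum_le[of "{..L}-{i}" "\<lambda>j. [:int j, 1:]"] by (simp add: o_def)
  also have "\<dots> = L" using i by simp
  finally show "degree (smult (d i) (\<Prod>j\<in>{..L}-{i}. [:int j, 1:])) \<le> L"
    using degree_smult_le order_trans by blast
qed simp


lemma Fpoly_nondiv:
  fixes p :: int
  assumes "prime p" "int L < p" "d L = 1"
  shows "\<exists>k. \<not> p dvd coeff (Fpoly L d) k"
proof (rule ccontr)
  assume "\<not> ?thesis"
  hence all: "\<forall>k. p dvd coeff (Fpoly L d) k" by blast
  have "p dvd poly (Fpoly L d) (- int L)"
    unfolding poly_altdef using all by (intro dvd_sum) simp
  moreover have "poly (Fpoly L d) (- int L) = (\<Prod>j\<in>{..L}-{L}. - int L + int j)"
  proof -
    have z: "(\<Prod>j\<in>{..L}-{i}. int j - int L) = 0" if "i < L" for i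
      using that by (intro prod_zero) auto
    have "poly (Fpoly L d) (- int L) = (\<Sum>i\<in>insert L {..<L}. d i * (\<Prod>j\<in>{..L}-{i}. - int L + int j))"
      unfolding poly_Fpoly by (simp add: atMost_atLeast0 lessThan_atLeast0 atLeastLessThanSuc_atLeastAtMost[symmetric])
    also have "\<dots> = d L * (\<Prod>j\<in>{..L}-{L}. - int L + int j)"
    proof -
      have "(\<Sum>i<L. d i * (\<Prod>j\<in>{..L}-{i}. int j - int L)) = 0"
        by (rule sum.neutral) (simp add: z)
      thus ?thesis by simp
    qed
    finally show ?thesis using assms(3) by simp
  qed
  moreover have "\<not> p dvd (\<Prod>j\<in>{..L}-{L}. - int L + int j)"
  proof
    assume "p dvd (\<Prod>j\<in>{..L}-{L}. - int L + int j)"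
    then obtain j where j: "j \<in> {..L}-{L}" "p dvd - int L + int j"
      using prime_dvd_prod_iff[OF _ assms(1), of "{..L}-{L}"] by auto
    moreover have "- int L + int j = - (int L - int j)" by simp
    ultimately have "p dvd int L - int j" using dvd_minus_iff by metis
    moreover have "0 < int L - int j" "int L - int j < p" using j(1) assms(2) by auto
    ultimately show False using zdvd_not_zless by blast
  qed
  ultimately show False by metis
qed


lemma shift_rel:
  fixes p x :: int and c :: "nat \<Rightarrow> int"
  assumes "prime p" "\<forall>i\<le>L. \<not> p dvd (x + int i)"
   "p dvd (fermat_quotient p (x + int L) - (\<Sum>i<L. c i * fermat_quotient p (x + int i)))"
   "p dvd (fermat_quotient p (x + int L + p) - (\<Sum>i<L. c i * fermat_quotient p (x + int i + p)))"
  shows "p dvd ((x + int L)^nat(p-2) - (\<Sum>i<L. c i * (x + int i)^nat(p-2)))"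
proof -
  define e where "e = nat (p - 2)"
  define fq where "fq = fermat_quotient p"
  have sh: "p dvd (fq (x + int i + p) - fq (x + int i) + (x + int i)^e)" if "i \<le> L" for i
    using fq_shift[OF assms(1)] assms(2) that unfolding fq_def e_def by blast
  have A: "p dvd (\<Sum>i<L. c i * (fq (x + int i + p) - fq (x + int i) + (x + int i)^e))"
    using sh by (intro dvd_sum dvd_mult) auto
  have eq: "(x + int L)^e - (\<Sum>i<L. c i * (x + int i)^e) =
     (fq (x + int L + p) - fq (x + int L) + (x + int L)^e)
     - (fq (x + int L + p) - (\<Sum>i<L. c i * fq (x + int i + p)))
     + (fq (x + int L) - (\<Sum>i<L. c i * fq (x + int i)))
     - (\<Sum>i<L. c i * (fq (x + int i + p) - fq (x + int i) + (x + int i)^e))"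
    by (simp add: sum_subtractf sum.distrib algebra_simps)
  have "p dvd (fq (x + int L + p) - fq (x + int L) + (x + int L)^e)
     - (fq (x + int L + p) - (\<Sum>i<L. c i * fq (x + int i + p)))
     + (fq (x + int L) - (\<Sum>i<L. c i * fq (x + int i)))
     - (\<Sum>i<L. c i * (fq (x + int i + p) - fq (x + int i) + (x + int i)^e))"
    using dvd_diff[OF dvd_add[OF dvd_diff[OF sh[of L] assms(4)[folded fq_def]] assms(3)[folded fq_def]] A]
    by simp
  then have "p dvd (x + int L)^e - (\<Sum>i<L. c i * (x + int i)^e)" by (simp only: eq)
  then show ?thesis unfolding e_def .
qed

lemma root_F:
  fixes p x :: int and c :: "nat \<Rightarrow> int"
  assumes "prime p" "\<forall>i\<le>L. \<not> p dvd (x + int i)"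
   "p dvd ((x + int L)^nat(p-2) - (\<Sum>i<L. c i * (x + int i)^nat(p-2)))"
  shows "p dvd poly (Fpoly L (\<lambda>i. if i = L then 1 else - c i)) x"
proof -
  define e where "e = nat (p - 2)"
  define d where "d = (\<lambda>i. if i = L then 1 else - c i)"
  define P where "P = (\<Prod>j\<le>L. x + int j)"
  define Q where "Q = (\<lambda>i. \<Prod>j\<in>{..L}-{i}. x + int j)"
  have p2: "p \<ge> 2" using assms(1) prime_ge_2_int by blast
  have key: "p dvd (Q i - P * (x + int i)^e)" if i: "i \<le> L" for i
  proof -
    have "P = (x + int i) * Q i" unfolding P_def Q_def using i
      by (simp add: prod.remove[of "{..L}" i])
    moreover have ne: "nat (p - 1) = Suc e" using p2 e_def by simp
    ultimately have "P * (x + int i)^e = Q i * (x + int i) ^ nat (p - 1)"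
      by (simp add: algebra_simps)
    hence "Q i - P * (x + int i)^e = - (Q i * ((x + int i) ^ nat (p - 1) - 1))"
      by (simp add: algebra_simps)
    moreover have "p dvd ((x + int i) ^ nat (p - 1) - 1)"
      using fermat_int[OF assms(1)] assms(2) i by blast
    ultimately show ?thesis by simp
  qed
  have s1: "p dvd (\<Sum>i\<le>L. d i * (Q i - P * (x + int i)^e))"
    using key by (intro dvd_sum dvd_mult) auto
  have s2: "(\<Sum>i\<le>L. d i * (x + int i)^e) = (x + int L)^e - (\<Sum>i<L. c i * (x + int i)^e)"
  proof -
    have "(\<Sum>i\<le>L. d i * (x + int i)^e) = d L * (x + int L)^e + (\<Sum>i<L. d i * (x + int i)^e)"
      by (simp add: lessThan_Suc_atMost[symmetric])
    also have "(\<Sum>i<L. d i * (x + int i)^e) = (\<Sum>i<L. - (c i * (x + int i)^e))"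
      by (rule sum.cong) (auto simp: d_def)
    finally show ?thesis by (simp add: d_def sum_negf)
  qed
  have "poly (Fpoly L d) x = (\<Sum>i\<le>L. d i * (Q i - P * (x + int i)^e)) + P * (\<Sum>i\<le>L. d i * (x + int i)^e)"
    unfolding poly_Fpoly Q_def by (simp add: algebra_simps sum_distrib_left sum.distrib sum_subtractf)
  also have "\<dots> = (\<Sum>i\<le>L. d i * (Q i - P * (x + int i)^e)) + P * ((x + int L)^e - (\<Sum>i<L. c i * (x + int i)^e))"
    by (simp only: s2)
  finally have "poly (Fpoly L d) x = \<dots>" .
  moreover have "p dvd (\<Sum>i\<le>L. d i * (Q i - P * (x + int i)^e)) + P * ((x + int L)^e - (\<Sum>i<L. c i * (x + int i)^e))"
    using s1 assms(3) unfolding e_def by (intro dvd_add dvd_mult) auto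
  ultimately show ?thesis unfolding d_def by simp
qed


lemma mod_inj_aux:
  fixes a b p :: int
  assumes "0 \<le> a - b" "a - b < p" "a mod p = b mod p"
  shows "a = b"
proof -
  have "(a - b) mod p = (a mod p - b mod p) mod p" by (simp add: mod_diff_eq)
  also have "\<dots> = 0" using assms(3) by simp
  finally have "(a - b) mod p = 0" .
  moreover have "(a - b) mod p = a - b" using assms(1,2) by simp
  ultimately show ?thesis by simp
qed

theorem theorem14:
  fixes p M :: int and N :: nat
  assumes "prime p" and "1 \<le> N" and "int N < p ^ 2"
  shows "real (lin_compl_mod p N (\<lambda>i. fermat_quotient p (M + 1 + int i)))
           \<ge> min ((real_of_int p - 1) / 2) ((real N - real_of_int p - 1) / 3)"
proof -
  define s where "s = (\<lambda>i. fermat_quotient p (M + 1 + int i))"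
  define L where "L = lin_compl_mod p N s"
  have p2: "p \<ge> 2" using assms(1) prime_ge_2_int by blast
  have "\<exists>c :: nat \<Rightarrow> int. \<forall>u. u + L < N \<longrightarrow> [s (u + L) = (\<Sum>i<L. c i * s (u + i))] (mod p)"
    unfolding L_def lin_compl_mod_def by (rule LeastI[of _ N]) simp
  then obtain c :: "nat \<Rightarrow> int" where c: "\<And>u. u + L < N \<Longrightarrow> [s (u + L) = (\<Sum>i<L. c i * s (u + i))] (mod p)"
    by blast
  have main: "p - 1 \<le> 2 * int L \<or> int N - p - 1 \<le> 3 * int L"
  proof (cases "int L < p")
    case False then show ?thesis by simp
  next
    case True
    define K where "K = int N - p - int L"
    define m where "m = min K p"
    define I where "I = {M + 1 ..< M + 1 + m}"
    define S where "S = {x\<in>I. 1 \<le> x mod p \<and> x mod p \<le> p - 1 - int L}"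
    define F where "F = Fpoly L (\<lambda>i. if i = L then 1 else - c i)"
    have finI: "finite I" unfolding I_def by simp
    have injI: "inj_on (\<lambda>x. x mod p) I"
    proof (rule inj_onI)
      fix x y assume xy: "x \<in> I" "y \<in> I" "x mod p = y mod p"
      have "m \<le> p" unfolding m_def by simp
      show "x = y"
      proof (cases "y \<le> x")
        case True then show ?thesis using mod_inj_aux[of x y p] xy \<open>m \<le> p\<close> unfolding I_def by auto
      next
        case False then show ?thesis using mod_inj_aux[of y x p] xy \<open>m \<le> p\<close> unfolding I_def by auto
      qed
    qed
    have SI: "S \<subseteq> I" unfolding S_def by auto
    have roots: "\<forall>x\<in>S. p dvd poly F x"
    proof
      fix x assume xS: "x \<in> S"
      define j where "j = nat (x - M - 1)"
      have xj: "x = M + 1 + int j" and jm: "int j < m" using xS unfolding S_def I_def j_def by auto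
      have jK: "int j + p + int L < int N" using jm unfolding m_def K_def by simp
      have xm1: "1 \<le> x mod p" "x mod p \<le> p - 1 - int L" using xS unfolding S_def by auto
      have nd: "\<forall>i\<le>L. \<not> p dvd (x + int i)"
      proof (intro allI impI)
        fix i assume i: "i \<le> L"
        have "(x + int i) mod p = (x mod p + int i) mod p" by (simp add: mod_add_left_eq)
        also have "\<dots> = x mod p + int i" using xm1 i by (intro mod_pos_pos_trivial) auto
        finally show "\<not> p dvd (x + int i)" using xm1 by (simp add: dvd_eq_mod_eq_0)
      qed
      have xi: "\<And>i. M + 1 + int (j + i) = x + int i" using xj by simp
      have xpi: "\<And>i. M + 1 + int (j + nat p + i) = x + int i + p" using xj p2 by simp
      have r1: "[s (j + L) = (\<Sum>i<L. c i * s (j + i))] (mod p)"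
        by (rule c) (use jK p2 in linarith)
      have r2: "[s (j + nat p + L) = (\<Sum>i<L. c i * s (j + nat p + i))] (mod p)"
        by (rule c) (use jK p2 in linarith)
      have e1: "s (j + L) = fermat_quotient p (x + int L)" unfolding s_def xi ..
      have e2: "(\<Sum>i<L. c i * s (j + i)) = (\<Sum>i<L. c i * fermat_quotient p (x + int i))"
        unfolding s_def xi ..
      have e3: "s (j + nat p + L) = fermat_quotient p (x + int L + p)" unfolding s_def xpi ..
      have e4: "(\<Sum>i<L. c i * s (j + nat p + i)) = (\<Sum>i<L. c i * fermat_quotient p (x + int i + p))"
        unfolding s_def xpi ..
      have h3: "p dvd (fermat_quotient p (x + int L) - (\<Sum>i<L. c i * fermat_quotient p (x + int i)))"
        using r1 unfolding e1 e2 cong_iff_dvd_diff .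
      have h4: "p dvd (fermat_quotient p (x + int L + p) - (\<Sum>i<L. c i * fermat_quotient p (x + int i + p)))"
        using r2 unfolding e3 e4 cong_iff_dvd_diff .
      show "p dvd poly F x"
        unfolding F_def using root_F[OF assms(1) nd shift_rel[OF assms(1) nd h3 h4]] .
    qed
    have ndF: "\<exists>k. \<not> p dvd coeff F k" unfolding F_def by (rule Fpoly_nondiv[OF assms(1) True]) simp
    have "card S \<le> degree F"
      by (rule roots_mod_p[OF assms(1) ndF finite_subset[OF SI finI] inj_on_subset[OF injI SI] roots])
    moreover have "degree F \<le> L" unfolding F_def by (rule degree_Fpoly)
    ultimately have cS: "card S \<le> L" by simp
    have img: "(\<lambda>x. x mod p) ` (I - S) \<subseteq> insert 0 {p - int L .. p - 1}"
    proof
      fix r assume "r \<in> (\<lambda>x. x mod p) ` (I - S)"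
      then obtain x where x: "x \<in> I - S" "r = x mod p" by blast
      have "0 \<le> x mod p" "x mod p < p" using p2 by auto
      then show "r \<in> insert 0 {p - int L .. p - 1}" using x unfolding S_def by auto
    qed
    have "card (I - S) = card ((\<lambda>x. x mod p) ` (I - S))"
      using inj_on_subset[OF injI, of "I - S"] by (simp add: card_image)
    also have "\<dots> \<le> card (insert 0 {p - int L .. p - 1})"
      by (rule card_mono[OF _ img]) simp
    also have "\<dots> \<le> Suc (card {p - int L .. p - 1})" by (rule card_insert_le_m1) simp_all
    also have "\<dots> = Suc L" by simp
    finally have cT: "card (I - S) \<le> Suc L" .
    have "card I = card S + card (I - S)"
      using card_Diff_subset[OF finite_subset[OF SI finI] SI] card_mono[OF finI SI] by simp
    moreover have "card I = nat m" unfolding I_def by simp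
    ultimately have "nat m \<le> 2 * L + 1" using cS cT by simp
    hence "int (nat m) \<le> 2 * int L + 1" by linarith
    hence mle: "m \<le> 2 * int L + 1" by linarith
    show ?thesis
    proof (cases "K \<le> p")
      case True
      hence "m = K" unfolding m_def by simp
      hence "int N - p - int L \<le> 2 * int L + 1" using mle unfolding K_def by simp
      then show ?thesis by linarith
    next
      case False
      hence "m = p" unfolding m_def by simp
      then show ?thesis using mle by linarith
    qed
  qed
  have "min ((real_of_int p - 1) / 2) ((real N - real_of_int p - 1) / 3) \<le> real L"
  proof (cases "p - 1 \<le> 2 * int L")
    case True
    hence "real_of_int (p - 1) \<le> real_of_int (2 * int L)" by (simp only: of_int_le_iff)
    hence "(real_of_int p - 1) / 2 \<le> real L" by simp
    then show ?thesis by (rule order_trans[OF min.cobounded1])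
  next
    case False
    hence "int N - p - 1 \<le> 3 * int L" using main by simp
    hence "real_of_int (int N - p - 1) \<le> real_of_int (3 * int L)" by (simp only: of_int_le_iff)
    hence "(real N - real_of_int p - 1) / 3 \<le> real L" by simp
    then show ?thesis by (rule order_trans[OF min.cobounded2])
  qed
  then show ?thesis unfolding L_def s_def by simp
qed

end
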